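(* Skeptic can weakly force each of the events \[ E_5:=\{\xi:\ s_n>\sqrt n-1\ \text{for infinitely many } n\},\qquad E_6:=\{\xi:\ s_n<-\sqrt n+1\ \text{for infinitely many } n\}. \]
   Context: Fair-coin game: in rounds $n=1,2,\dots$ Skeptic announces $M_n\in\mathbb{R}$ (depending only on $x_1,\dots,x_{n-1}$), then Reality announces $x_n\in\{-1,1\}$. A path is an infinite sequence $\xi=x_1x_2\cdots\in\{-1,1\}^{\mathbb{N}}$, and $\Omega$ is the set of paths. We write $s_n:=x_1+\cdots+x_n$, with $s_0=0$. The capital process of a strategy with zero initial capital is $\mathcal{K}^{\mathcal{P}}_n=\sum_{k=1}^nM_kx_k$. Skeptic weakly forces $E\subseteq\Omega$ if some strategy $\mathcal{P}$ has $\mathcal{K}^{\mathcal{P}}_n(\xi)\ge-1$ for all $\xi\in\Omega$ and $n\ge0$, and $\limsup_n\mathcal{K}^{\mathcal{P}}_n(\xi)=\infty$ for every $\xi\notin E$. *)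

theory Defs
  imports "HOL-Analysis.Analysis" "HOL-Library.Liminf_Limsup"
begin

text \<open>Paths: a path is xi :: nat => real with all values in {-1,1}; the move x_(k+1)
  of Reality in round k+1 is xi k (0-based storage of x_1 x_2 ...).\<close>

definition Omega :: "(nat \<Rightarrow> real) set" where
  "Omega = {xi. \<forall>n. xi n \<in> {-1, 1}}"

definition ssum :: "(nat \<Rightarrow> real) \<Rightarrow> nat \<Rightarrow> real" where
  "ssum xi n = (\<Sum>k<n. xi k)"

text \<open>A strategy maps the history (x_1,...,x_(n-1)) to the stake M_n.
  Capital with zero initial capital: K_n = sum_(k=1..n) M_k x_k.\<close>
type_synonym strategy = "real list \<Rightarrow> real"

definition capital :: "strategy \<Rightarrow> (nat \<Rightarrow> real) \<Rightarrow> nat \<Rightarrow> real" where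
  "capital P xi n = (\<Sum>k<n. P (map xi [0..<k]) * xi k)"

definition weakly_forces :: "(nat \<Rightarrow> real) set \<Rightarrow> bool" where
  "weakly_forces E \<longleftrightarrow> (\<exists>P.
     (\<forall>xi\<in>Omega. \<forall>n. capital P xi n \<ge> -1) \<and>
     (\<forall>xi\<in>Omega. xi \<notin> E \<longrightarrow> limsup (\<lambda>n. ereal (capital P xi n)) = \<infinity>))"

definition E5 :: "(nat \<Rightarrow> real) set" where
  "E5 = {xi \<in> Omega. \<exists>\<^sub>\<infinity>n. ssum xi n > sqrt (real n) - 1}"

definition E6 :: "(nat \<Rightarrow> real) set" where
  "E6 = {xi \<in> Omega. \<exists>\<^sub>\<infinity>n. ssum xi n < - sqrt (real n) + 1}"

end

theory Submission
  imports Defs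
begin

lemma core_poly:
  fixes A u T n :: real
  assumes A: "u = 9/8 - A" "A > 0" and T: "2 \<le> T" "T \<le> 4" and n: "n \<ge> 5"
  shows "4 * A * (A + u * T) \<le> (8*n+1)/(n+1)"
proof -
  have "4 * A * (A + u * T) \<le> 27/4"
  proof (cases "u \<ge> 0")
    case True
    have "u*T \<le> u*4" using True T by (intro mult_left_mono) auto
    hence "A + u*T \<le> A + 4*u" by simp
    hence "4*A*(A+u*T) \<le> 4*A*(A+4*u)" using A by (simp add: mult_left_mono)
    also have "\<dots> = 27/4 - 12*(A - 3/4)^2" using A by (simp add: A(1) algebra_simps power2_eq_square)
    also have "\<dots> \<le> 27/4" by simp
    finally show ?thesis .
  next
    case False
    have "u*T \<le> u*2" using False T by (intro mult_left_mono_neg) auto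
    hence "A + u*T \<le> A + 2*u" by simp
    hence "4*A*(A+u*T) \<le> 4*A*(A+2*u)" using A by (simp add: mult_left_mono)
    also have "\<dots> = 81/16 - 4*(A - 9/8)^2" using A by (simp add: A(1) algebra_simps power2_eq_square)
    also have "\<dots> \<le> 27/4" using zero_le_power2[of "A - 9/8"] by linarith
    finally show ?thesis .
  qed
  also have "27/4 \<le> (8*n+1)/(n+1)" using n by (simp add: field_simps)
  finally show ?thesis .
qed

lemma core_ineq:
  fixes n s :: real
  assumes n: "n \<ge> 5" and s: "s \<le> sqrt n - 1"
  shows "(1 + 1/(8*n)) * (4*(9/8 - s/sqrt (n+1)) - (1/(n+1))/(9/8 - s/sqrt (n+1)))
         \<le> 4*(9/8 - s/sqrt n)"
proof -
  define r where "r = sqrt n"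
  define r' where "r' = sqrt (n+1)"
  have r0: "r > 0" using n by (simp add: r_def)
  have rr: "r * r = n" using n by (simp add: r_def)
  have rr': "r' * r' = n + 1" using n by (simp add: r'_def)
  have rle: "r \<le> r'" unfolding r_def r'_def by simp
  have r'0: "r' > 0" using r0 rle by simp
  have r'3: "r' \<le> 3*r"
  proof -
    have "sqrt (n+1) \<le> sqrt (9*n)" using n by simp
    also have "sqrt (9*n) = 3 * sqrt n" by (simp add: real_sqrt_mult)
    finally show ?thesis by (simp add: r_def r'_def)
  qed
  have diff: "r' - r = 1/(r'+r)"
  proof -
    have "(r' - r)*(r'+r) = 1" using rr rr' by (simp add: algebra_simps)
    thus ?thesis using r0 r'0 by (simp add: field_simps)
  qed
  define u where "u = s / r'"
  define A where "A = 9/8 - u"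
  define T where "T = 8*r/(r+r')"
  have T2: "2 \<le> T" using r0 r'0 r'3 by (simp add: T_def field_simps)
  have T4: "T \<le> 4" using r0 r'0 rle by (simp add: T_def field_simps)
  have "s + 1 \<le> r" using s r_def by simp
  hence "s/r' < 9/8"
    using r0 r'0 rle by (simp add: field_simps)
  hence A0: "A > 0" by (simp add: A_def u_def)
  have B: "9/8 - s/r = A - u*T/(8*n)"
  proof -
    have "s/r - s/r' = s*(r'-r)/(r*r')" using r0 r'0 by (simp add: field_simps)
    also have "\<dots> = s/(r*r'*(r+r'))" unfolding diff using r0 r'0 by simp
    also have "\<dots> = u*T/(8*n)"
    proof -
      have "u*T/(8*n) = (s/r')*(8*r/(r+r'))/(8*(r*r))" by (simp add: u_def T_def rr)
      also have "\<dots> = (s*(8*r))/(r'*(r+r')*(8*(r*r)))" by simp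
      also have "\<dots> = (s*(8*r))/((r*r'*(r+r'))*(8*r))"
        by (rule arg_cong[where f="\<lambda>x. (s*(8*r))/x"]) (simp add: mult_ac)
      also have "\<dots> = (s/(r*r'*(r+r'))) * ((8*r)/(8*r))" by (rule times_divide_times_eq[symmetric])
      also have "\<dots> = s/(r*r'*(r+r'))" using r0 by simp
      finally show ?thesis by simp
    qed
    finally show ?thesis unfolding A_def u_def by simp
  qed
  have P: "4 * A * (A + u * T) \<le> (8*n+1)/(n+1)"
    by (rule core_poly) (use A0 T2 T4 n in \<open>auto simp: A_def\<close>)
  have goal: "(1 + 1/(8*n)) * (4*A - (1/(n+1))/A) \<le> 4*(A - u*T/(8*n))"
  proof -
    have "4*(n+1)*A*(A + u*T) \<le> 8*n+1" using P n by (simp add: field_simps)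
    hence "(8*n+1)*(4*A*A*(n+1) - 1) \<le> 32*n*(n+1)*A*A - 4*(n+1)*A*u*T"
      by (simp add: algebra_simps)
    moreover have D: "8*n*(n+1)*A > 0" using n A0 by simp
    ultimately have I: "((8*n+1)*(4*A*A*(n+1) - 1)) / (8*n*(n+1)*A) \<le> (32*n*(n+1)*A*A - 4*(n+1)*A*u*T) / (8*n*(n+1)*A)"
      by (intro divide_right_mono) auto
    have L1: "1 + 1/(8*n) = (8*n+1)/(8*n)" using n by (simp add: field_simps)
    have Dn: "(n+1)*A \<noteq> 0" using n A0 by simp
    have L2: "4*A - (1/(n+1))/A = (4*A*((n+1)*A) - 1)/((n+1)*A)"
    proof -
      have "4*A - (1/(n+1))/A = (4*A*((n+1)*A))/((n+1)*A) - 1/((n+1)*A)" using Dn by simp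
      also have "\<dots> = (4*A*((n+1)*A) - 1)/((n+1)*A)" by (rule diff_divide_distrib[symmetric])
      finally show ?thesis .
    qed
    have L: "(1 + 1/(8*n)) * (4*A - (1/(n+1))/A) = ((8*n+1)*(4*A*A*(n+1) - 1)) / (8*n*(n+1)*A)"
      unfolding L1 L2 times_divide_times_eq by (simp add: mult_ac)
    have R1: "A - u*T/(8*n) = (8*n*A - u*T)/(8*n)" using n by (simp add: field_simps)
    have R: "4*(A - u*T/(8*n)) = (32*n*(n+1)*A*A - 4*(n+1)*A*u*T) / (8*n*(n+1)*A)"
    proof -
      have "(32*n*(n+1)*A*A - 4*(n+1)*A*u*T) / (8*n*(n+1)*A) = (4*(8*n*A - u*T)*((n+1)*A)) / ((8*n)*((n+1)*A))"
        by (simp add: algebra_simps)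
      also have "\<dots> = (4*(8*n*A - u*T))/(8*n)" using n A0 by (rule_tac mult_divide_mult_cancel_right) auto
      finally show ?thesis unfolding R1 by simp
    qed
    show ?thesis unfolding L R by (rule I)
  qed
  have e1: "9/8 - s/sqrt(n+1) = A" by (simp add: A_def u_def r'_def)
  have e2: "9/8 - s/sqrt n = A - u*T/(8*n)" using B by (simp add: r_def)
  show ?thesis unfolding e1 e2 by (rule goal)
qed

lemma root8_step:
  fixes n :: real assumes n: "n \<ge> 1"
  shows "root 8 (n+1) \<le> root 8 n * (1 + 1/(8*n))"
proof -
  have "1 + real 8 * (1/(8*n)) \<le> (1 + 1/(8*n))^8"
    proof (rule Bernoulli_inequality)
    have "0 \<le> 1/(8*n)" using n by simp
    thus "-1 \<le> 1/(8*n)" by linarith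
  qed
  hence "1 + 1/n \<le> (1 + 1/(8*n))^8" using n by simp
  hence "n * (1 + 1/n) \<le> n * (1 + 1/(8*n))^8" using n by (intro mult_left_mono) auto
  hence "n + 1 \<le> n * (1 + 1/(8*n))^8" using n by (simp add: algebra_simps)
  hence "root 8 (n+1) \<le> root 8 (n * (1 + 1/(8*n))^8)" by (intro real_root_le_mono) auto
  also have "\<dots> = root 8 n * root 8 ((1 + 1/(8*n))^8)" by (rule real_root_mult)
  also have "root 8 ((1 + 1/(8*n))^8) = 1 + 1/(8*n)" using n by (intro real_root_pos2) auto
  finally show ?thesis .
qed

definition FF :: "real \<Rightarrow> real \<Rightarrow> real" where
  "FF n s = sqrt (root 8 n * (9/8 - s / sqrt n))"

lemma sqrt_pair:
  fixes A d :: real assumes "A - d > 0" "d > 0"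
  shows "sqrt (A - d) + sqrt (A + d) \<le> sqrt (4*A - d^2/A)"
proof -
  have A0: "A > 0" using assms by simp
  have ab: "(A - d)*(A + d) = A^2 - d^2" by (simp add: algebra_simps power2_eq_square)
  have m0: "A - d^2/(2*A) \<ge> 0"
  proof -
    have "d^2 \<le> A^2" using assms by (simp add: power_mono)
    moreover have "A*A \<ge> 0" by simp
    ultimately have "d^2 \<le> 2*A*A" unfolding power2_eq_square by linarith
    thus ?thesis using A0 by (simp add: field_simps)
  qed
  have sq: "A^2 - d^2 \<le> (A - d^2/(2*A))^2"
  proof -
    have q: "2*A*(d^2/(2*A)) = d^2" using A0 by simp
    have "(A - d^2/(2*A))^2 = A^2 - 2*A*(d^2/(2*A)) + (d^2/(2*A))^2"
      by (simp add: power2_diff)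
    hence "(A - d^2/(2*A))^2 = A^2 - d^2 + (d^2/(2*A))^2" unfolding q .
    thus ?thesis by simp
  qed
  have "sqrt (A - d) * sqrt (A + d) = sqrt (A^2 - d^2)" by (simp add: real_sqrt_mult[symmetric] ab)
  also have "\<dots> \<le> A - d^2/(2*A)" using sq m0 by (intro real_le_lsqrt) auto
  finally have pr: "sqrt (A - d) * sqrt (A + d) \<le> A - d^2/(2*A)" .
  have "(sqrt (A - d) + sqrt (A + d))^2 = (A - d) + (A + d) + 2 * (sqrt (A - d) * sqrt (A + d))"
    using assms by (simp add: power2_sum)
  also have "\<dots> \<le> 2*A + 2*(A - d^2/(2*A))" using pr by simp
  also have "\<dots> = 4*A - d^2/A" using A0 by (simp add: field_simps)
  finally have "(sqrt (A - d) + sqrt (A + d))^2 \<le> 4*A - d^2/A" .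
  thus ?thesis by (simp add: real_le_rsqrt)
qed

lemma FF_pos:
  fixes n s :: real assumes "n > 0" "s < 9/8 * sqrt n"
  shows "FF n s > 0"
proof -
  have "s / sqrt n < 9/8" using assms by (simp add: divide_less_eq)
  thus ?thesis using assms unfolding FF_def by (simp add: mult_pos_pos)
qed

lemma superharm:
  fixes n s :: real
  assumes n: "n \<ge> 5" and s: "s \<le> sqrt n - 1"
  shows "FF (n+1) (s+1) + FF (n+1) (s-1) \<le> 2 * FF n s"
proof -
  define r' where "r' = sqrt (n+1)"
  define A where "A = 9/8 - s/r'"
  define d where "d = 1/r'"
  have r'0: "r' > 0" using n by (simp add: r'_def)
  have d0: "d > 0" using r'0 by (simp add: d_def)
  have dsq: "d^2 = 1/(n+1)" using n by (simp add: d_def r'_def power_divide)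
  have e1: "9/8 - (s+1)/r' = A - d" by (simp add: A_def d_def add_divide_distrib)
  have e2: "9/8 - (s-1)/r' = A + d" by (simp add: A_def d_def diff_divide_distrib)
  have "s + 1 \<le> r'" using s unfolding r'_def
    by (smt (verit) real_sqrt_le_mono)
  hence "(s+1)/r' \<le> 1" using r'0 by (simp add: divide_le_eq)
  hence Ad: "A - d > 0" using e1 by linarith
  define Q where "Q = 4*A - d^2/A"
  have sp: "sqrt (A - d) + sqrt (A + d) \<le> sqrt Q" unfolding Q_def by (rule sqrt_pair[OF Ad d0])
  have "sqrt Q > 0" using sp Ad d0
    by (smt (verit) real_sqrt_gt_zero real_sqrt_ge_zero)
  hence Q0: "Q \<ge> 0" by (simp add: less_imp_le) 
  define \<phi>' where "\<phi>' = root 8 (n+1)"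
  define \<phi> where "\<phi> = root 8 n"
  have p0: "\<phi>' \<ge> 0" "\<phi> \<ge> 0" using n by (auto simp: \<phi>'_def \<phi>_def)
  have LHS: "FF (n+1) (s+1) + FF (n+1) (s-1) = sqrt \<phi>' * (sqrt (A - d) + sqrt (A + d))"
    unfolding FF_def r'_def[symmetric] e1 e2 \<phi>'_def real_sqrt_mult by (simp add: distrib_left)
  also have "\<dots> \<le> sqrt \<phi>' * sqrt Q" using sp p0 by (intro mult_left_mono) auto
  also have "\<dots> = sqrt (\<phi>' * Q)" by (simp add: real_sqrt_mult)
  also have "\<dots> \<le> sqrt (4 * (\<phi> * (9/8 - s/sqrt n)))"
  proof (rule real_sqrt_le_mono)
    have c: "(1 + 1/(8*n)) * Q \<le> 4*(9/8 - s/sqrt n)"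
      using core_ineq[OF n s] unfolding Q_def dsq A_def r'_def .
    have "\<phi>' * Q \<le> (\<phi> * (1 + 1/(8*n))) * Q"
      using root8_step[of n] n Q0 unfolding \<phi>'_def \<phi>_def by (intro mult_right_mono) auto
    also have "\<dots> = \<phi> * ((1 + 1/(8*n)) * Q)" by simp
    also have "\<dots> \<le> \<phi> * (4*(9/8 - s/sqrt n))" using c p0 by (intro mult_left_mono) auto
    finally show "\<phi>' * Q \<le> 4 * (\<phi> * (9/8 - s/sqrt n))" by (simp only: mult.left_commute)
  qed
  also have "\<dots> = 2 * FF n s" unfolding FF_def \<phi>_def by (simp add: real_sqrt_mult)
  finally show ?thesis .
qed

lemma step_factor:
  fixes n s x :: real
  assumes n: "n \<ge> 5" and s: "s \<le> sqrt n - 1" and x: "x \<in> {-1, 1}"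
  shows "(1 + (FF (n+1) (s+1) - FF (n+1) (s-1)) / (2 * FF n s) * x) * FF n s \<ge> FF (n+1) (s+x)"
    and "FF (n+1) (s+x) > 0" and "FF n s > 0"
proof -
  have sn: "sqrt n \<le> sqrt (n+1)" by simp
  have "sqrt n > 0" using n by simp
  hence "s < 9/8 * sqrt n" using s by linarith
  thus F0: "FF n s > 0" using n by (intro FF_pos) auto
  have "s + x \<le> sqrt n" using s x by auto
  moreover have "sqrt (n+1) > 0" using n by simp
  ultimately have "s + x < 9/8 * sqrt (n+1)" using sn by linarith
  thus "FF (n+1) (s+x) > 0" using n by (intro FF_pos) auto
  have sh: "FF (n+1) (s+1) + FF (n+1) (s-1) \<le> 2 * FF n s" by (rule superharm[OF n s])
  have eq: "(1 + (FF (n+1) (s+1) - FF (n+1) (s-1)) / (2 * FF n s) * x) * FF n s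
        = FF n s + (FF (n+1) (s+1) - FF (n+1) (s-1)) / 2 * x" using F0 by (simp add: field_simps)
  show "(1 + (FF (n+1) (s+1) - FF (n+1) (s-1)) / (2 * FF n s) * x) * FF n s \<ge> FF (n+1) (s+x)"
    unfolding eq using x sh by (auto simp: field_simps)
qed

definition inside :: "real list \<Rightarrow> bool" where
  "inside h \<longleftrightarrow> length h \<ge> 5 \<and> sum_list h \<le> sqrt (real (length h)) - 1"

definition sig :: "real list \<Rightarrow> real" where
  "sig h = (if inside h then
      (FF (real (length h) + 1) (sum_list h + 1) - FF (real (length h) + 1) (sum_list h - 1))
        / (2 * FF (real (length h)) (sum_list h)) else 0)"

definition Wl :: "real list \<Rightarrow> real" where
  "Wl h = (\<Prod>k<length h. 1 + sig (take k h) * h ! k)"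

definition P5 :: "real list \<Rightarrow> real" where
  "P5 h = Wl h * sig h"

definition Wx :: "(nat \<Rightarrow> real) \<Rightarrow> nat \<Rightarrow> real" where
  "Wx xi n = (\<Prod>k<n. 1 + sig (map xi [0..<k]) * xi k)"

lemma Wl_map: "Wl (map xi [0..<n]) = Wx xi n"
  unfolding Wl_def Wx_def by (intro prod.cong) (auto simp: take_map)

lemma Wx_Suc: "Wx xi (Suc n) = Wx xi n * (1 + sig (map xi [0..<n]) * xi n)"
  unfolding Wx_def by simp

lemma capital_P5: "capital P5 xi n = Wx xi n - 1"
proof (induction n)
  case 0
  then show ?case by (simp add: capital_def Wx_def)
next
  case (Suc n)
  have "capital P5 xi (Suc n) = capital P5 xi n + P5 (map xi [0..<n]) * xi n"
    by (simp add: capital_def)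
  also have "\<dots> = (Wx xi n - 1) + P5 (map xi [0..<n]) * xi n" using Suc.IH by simp
  also have "\<dots> = Wx xi (Suc n) - 1" unfolding P5_def Wl_map Wx_Suc by (simp add: algebra_simps)
  finally show ?case .
qed

lemma sum_hist: "sum_list (map xi [0..<n]) = ssum xi n"
  unfolding ssum_def by (simp add: sum_list_sum_nth atLeast0LessThan)

lemma factor_props:
  assumes xi: "xi \<in> Omega"
  shows "1 + sig (map xi [0..<k]) * xi k > 0"
    and "inside (map xi [0..<k]) \<Longrightarrow>
         (1 + sig (map xi [0..<k]) * xi k) * FF (real k) (ssum xi k) \<ge> FF (real (Suc k)) (ssum xi (Suc k))"
proof -
  have x: "xi k \<in> {-1, 1}" using xi by (simp add: Omega_def)
  have ss: "ssum xi (Suc k) = ssum xi k + xi k" by (simp add: ssum_def)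
  show "1 + sig (map xi [0..<k]) * xi k > 0"
  proof (cases "inside (map xi [0..<k])")
    case True
    hence n: "real k \<ge> 5" and s: "ssum xi k \<le> sqrt (real k) - 1"
      by (auto simp: inside_def sum_hist)
    note sf = step_factor[OF n s x]
    have "(1 + sig (map xi [0..<k]) * xi k) * FF (real k) (ssum xi k) > 0"
      using sf(1) sf(2) True by (simp add: sig_def sum_hist)
    thus ?thesis using sf(3) by (simp add: zero_less_mult_iff)
  next
    case False
    then show ?thesis by (simp add: sig_def)
  qed
  assume True: "inside (map xi [0..<k])"
  hence n: "real k \<ge> 5" and s: "ssum xi k \<le> sqrt (real k) - 1"
    by (auto simp: inside_def sum_hist)
  note sf = step_factor[OF n s x]
  show "(1 + sig (map xi [0..<k]) * xi k) * FF (real k) (ssum xi k) \<ge> FF (real (Suc k)) (ssum xi (Suc k))"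
    using sf(1) True by (simp add: sig_def sum_hist ss add.commute)
qed

lemma Wx_pos: "xi \<in> Omega \<Longrightarrow> Wx xi n > 0"
  by (induction n) (auto simp: Wx_Suc Wx_def[of xi 0] factor_props)

lemma growth:
  assumes xi: "xi \<in> Omega" and N: "N \<ge> 5" and ev: "\<forall>m\<ge>N. ssum xi m \<le> sqrt (real m) - 1"
    and nN: "n \<ge> N"
  shows "Wx xi n * FF (real N) (ssum xi N) \<ge> Wx xi N * FF (real n) (ssum xi n)"
  using nN
proof (induction n rule: nat_induct_at_least)
  case base
  then show ?case by simp
next
  case (Suc n)
  have ins: "inside (map xi [0..<n])" using Suc.hyps N ev by (simp add: inside_def sum_hist)
  define f where "f = 1 + sig (map xi [0..<n]) * xi n"
  have f0: "f > 0" using factor_props(1)[OF xi] by (simp add: f_def)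
  have fF: "f * FF (real n) (ssum xi n) \<ge> FF (real (Suc n)) (ssum xi (Suc n))"
    using factor_props(2)[OF xi ins] by (simp add: f_def)
  have W0: "Wx xi N \<ge> 0" using Wx_pos[OF xi] by (simp add: less_imp_le)
  have "Wx xi (Suc n) * FF (real N) (ssum xi N) = f * (Wx xi n * FF (real N) (ssum xi N))"
    by (simp add: Wx_Suc f_def)
  also have "\<dots> \<ge> f * (Wx xi N * FF (real n) (ssum xi n))"
    using Suc.IH f0 by (intro mult_left_mono) auto
  finally have "Wx xi (Suc n) * FF (real N) (ssum xi N) \<ge> Wx xi N * (f * FF (real n) (ssum xi n))"
    by (simp add: mult_ac)
  moreover have "Wx xi N * (f * FF (real n) (ssum xi n)) \<ge> Wx xi N * FF (real (Suc n)) (ssum xi (Suc n))"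
    using fF W0 by (intro mult_left_mono) auto
  ultimately show ?case by linarith
qed

lemma FF_lower:
  fixes n s :: real assumes n: "n \<ge> 5" and s: "s \<le> sqrt n - 1"
  shows "FF n s \<ge> sqrt (root 8 n / 8)"
proof -
  have r: "sqrt n > 0" using n by simp
  have "s / sqrt n \<le> 1" using s r by (simp add: divide_le_eq)
  hence "9/8 - s/sqrt n \<ge> 1/8" by linarith
  hence "root 8 n * (1/8) \<le> root 8 n * (9/8 - s/sqrt n)" using n by (intro mult_left_mono) auto
  thus ?thesis unfolding FF_def by (simp add: real_sqrt_le_iff)
qed

lemma P5_good: "(\<forall>xi\<in>Omega. \<forall>n. capital P5 xi n \<ge> -1) \<and>
     (\<forall>xi\<in>Omega. xi \<notin> E5 \<longrightarrow> limsup (\<lambda>n. ereal (capital P5 xi n)) = \<infinity>)"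
proof (intro conjI ballI allI impI)
  fix xi n assume xi: "xi \<in> Omega"
  show "capital P5 xi n \<ge> -1" using Wx_pos[OF xi, of n] by (simp add: capital_P5)
next
  fix xi assume xi: "xi \<in> Omega" and nE: "xi \<notin> E5"
  have "\<not> (\<exists>\<^sub>\<infinity>n. ssum xi n > sqrt (real n) - 1)" using nE xi by (simp add: E5_def)
  hence "\<forall>\<^sub>F n in sequentially. ssum xi n \<le> sqrt (real n) - 1"
    by (simp add: not_frequently not_less cofinite_eq_sequentially)
  then obtain N0 where N0: "\<forall>m\<ge>N0. ssum xi m \<le> sqrt (real m) - 1"
    by (auto simp: eventually_sequentially)
  define N where "N = max N0 5"
  have N5: "N \<ge> 5" by (simp add: N_def)
  have ev: "\<forall>m\<ge>N. ssum xi m \<le> sqrt (real m) - 1" using N0 by (simp add: N_def)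
  have FN: "FF (real N) (ssum xi N) > 0"
    using step_factor(3)[of "real N" "ssum xi N" 1] N5 ev by auto
  define C where "C = Wx xi N / FF (real N) (ssum xi N)"
  have C0: "C > 0" using Wx_pos[OF xi] FN by (simp add: C_def)
  have lowb: "Wx xi n \<ge> C * sqrt (root 8 (real n) / 8)" if "n \<ge> N" for n
  proof -
    have g: "Wx xi n * FF (real N) (ssum xi N) \<ge> Wx xi N * FF (real n) (ssum xi n)"
      by (rule growth[OF xi N5 ev that])
    have "FF (real n) (ssum xi n) \<ge> sqrt (root 8 (real n) / 8)"
      using FF_lower[of "real n" "ssum xi n"] that N5 ev by auto
    hence "Wx xi N * FF (real n) (ssum xi n) \<ge> Wx xi N * sqrt (root 8 (real n) / 8)"
      using Wx_pos[OF xi, of N] by (intro mult_left_mono) auto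
    with g have "Wx xi n * FF (real N) (ssum xi N) \<ge> Wx xi N * sqrt (root 8 (real n) / 8)" by linarith
    thus ?thesis using FN by (simp add: C_def field_simps)
  qed
  have "((\<lambda>n. ereal (capital P5 xi n)) \<longlongrightarrow> \<infinity>) sequentially"
    unfolding tendsto_PInfty
  proof
    fix r :: real
    define K where "K = 8 * ((r+1)/C)^2 + 1"
    have K0: "K > 0" by (simp add: K_def add_nonneg_pos)
    define M where "M = max N (nat \<lceil>K^8\<rceil>)"
    show "\<forall>\<^sub>F n in sequentially. ereal r < ereal (capital P5 xi n)"
      unfolding eventually_sequentially
    proof (intro exI[of _ M] allI impI)
      fix n assume nM: "n \<ge> M"
      have "real n \<ge> K^8"
      proof -
        have "nat \<lceil>K^8\<rceil> \<le> n" using nM by (simp add: M_def)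
        hence "real (nat \<lceil>K^8\<rceil>) \<le> real n" by linarith
        moreover have "K^8 \<le> real (nat \<lceil>K^8\<rceil>)" by linarith
        ultimately show ?thesis by linarith
      qed
      hence "root 8 (K^8) \<le> root 8 (real n)" by (intro real_root_le_mono) auto
      hence Kr: "K \<le> root 8 (real n)" using K0 by (simp add: real_root_pos2)
      have "((r+1)/C)^2 < K / 8" by (simp add: K_def)
      also have "\<dots> \<le> root 8 (real n) / 8" using Kr by simp
      finally have "sqrt (((r+1)/C)^2) < sqrt (root 8 (real n) / 8)" by (simp only: real_sqrt_less_iff)
      hence "(r+1)/C < sqrt (root 8 (real n) / 8)" by (smt (verit) real_sqrt_abs)
      hence "r + 1 < C * sqrt (root 8 (real n) / 8)" using C0 by (simp add: field_simps)
      also have "\<dots> \<le> Wx xi n" using lowb nM by (simp add: M_def)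
      finally show "ereal r < ereal (capital P5 xi n)" by (simp add: capital_P5)
    qed
  qed
  thus "limsup (\<lambda>n. ereal (capital P5 xi n)) = \<infinity>"
    by (intro lim_imp_Limsup) auto
qed

lemma forces5: "weakly_forces E5"
  unfolding weakly_forces_def using P5_good by blast

definition P6 :: "real list \<Rightarrow> real" where
  "P6 h = - P5 (map uminus h)"

lemma capital_P6: "capital P6 xi n = capital P5 (\<lambda>k. - xi k) n"
  unfolding capital_def P6_def by (intro sum.cong) (auto simp: o_def)

lemma forces6: "weakly_forces E6"
  unfolding weakly_forces_def
proof (intro exI[of _ P6] conjI ballI allI impI)
  fix xi n assume xi: "xi \<in> Omega"
  have nxi: "(\<lambda>k. - xi k) \<in> Omega" using xi by (auto simp: Omega_def)
  show "capital P6 xi n \<ge> -1" unfolding capital_P6 using P5_good nxi by blast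
next
  fix xi assume xi: "xi \<in> Omega" and nE: "xi \<notin> E6"
  have nxi: "(\<lambda>k. - xi k) \<in> Omega" using xi by (auto simp: Omega_def)
  have ss: "ssum (\<lambda>k. - xi k) n = - ssum xi n" for n by (simp add: ssum_def sum_negf)
  have "(\<lambda>k. - xi k) \<notin> E5" using nE xi nxi unfolding E5_def E6_def
    by (simp add: ss algebra_simps)
  thus "limsup (\<lambda>n. ereal (capital P6 xi n)) = \<infinity>" unfolding capital_P6 using P5_good nxi by blast
qed

theorem theorem4:
  shows "weakly_forces E5 \<and> weakly_forces E6"
  using forces5 forces6 by blast

end
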